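(* Let $\mathbb{K}$ be a field, $S=\mathbb{K}[x_1,\ldots,x_n]$, and let $I\subseteq S$ be a support-$2$ monomial ideal such that the girth of $G(I)$ is at least six. Let $\{x_i,x_j\}\in E(G(I))$ be such that $\alpha_{i,j}\geq 2$. Suppose that $d(x_i,x_\ell)\ge 2$ for every leaf vertex $x_\ell$ of $G(I)$, or that $d(x_j,x_\ell)\ge 2$ for every leaf vertex $x_\ell$ of $G(I)$. Then $I^{(1)}\neq I$.
   Context: For a monomial ideal $I$, $\mathcal{G}(I)$ denotes its minimal set of monomial generators. $I$ is a support-$2$ monomial ideal if $\mathcal{G}(I)\subseteq\{x_i^ax_j^b : 1\le i<j\le n,\ a,b\ge 1\}$. The underlying simple graph $G(I)$ has vertices $x_1,\ldots,x_n$ and an edge $\{x_i,x_j\}$ whenever some element of $\mathcal{G}(I)$ has support $\{x_i,x_j\}$. For an edge $\{x_i,x_j\}$, $\alpha_{i,j}$ is the number of elements of $\mathcal{G}(I)$ whose support is exactly $\{x_i,x_j\}$. The girth of a graph is the length of its shortest cycle; a leaf is a vertex of degree $1$; $d(x,y)$ is the length of a shortest path between $x$ and $y$. $I^{(1)}=\bigcap_{P\in\mathrm{MinAss}(I)}(IS_P\cap S)$, the intersection of the primary components of $I$ at its minimal primes. *)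

theory Defs
  imports "HOL-Library.Poly_Mapping" "HOL-Library.Extended_Nat"
begin

text \<open>Polynomial ring S = K[x_v : v in 'v] over a field K, with a finite type 'v of variables
  (n = CARD('v)).\<close>

type_synonym ('v, 'k) mpoly = "('v \<Rightarrow>\<^sub>0 nat) \<Rightarrow>\<^sub>0 'k"

definition monom_of :: "('v \<Rightarrow>\<^sub>0 nat) \<Rightarrow> ('v, 'k::comm_ring_1) mpoly" where
  "monom_of m = Poly_Mapping.single m 1"

definition is_ideal :: "('a::comm_ring_1) set \<Rightarrow> bool" where
  "is_ideal I \<longleftrightarrow> 0 \<in> I \<and> (\<forall>a\<in>I. \<forall>b\<in>I. a + b \<in> I) \<and> (\<forall>r. \<forall>a\<in>I. r * a \<in> I)"

definition ideal_gen :: "('a::comm_ring_1) set \<Rightarrow> 'a set" where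
  "ideal_gen G = \<Inter> {J. is_ideal J \<and> G \<subseteq> J}"

definition is_prime_ideal :: "('a::comm_ring_1) set \<Rightarrow> bool" where
  "is_prime_ideal P \<longleftrightarrow> is_ideal P \<and> P \<noteq> UNIV \<and> (\<forall>a b. a * b \<in> P \<longrightarrow> a \<in> P \<or> b \<in> P)"

text \<open>Minimal primes of I (= minimal associated primes MinAss(I)).\<close>
definition min_primes :: "('a::comm_ring_1) set \<Rightarrow> 'a set set" where
  "min_primes I = {P. is_prime_ideal P \<and> I \<subseteq> P \<and>
     (\<forall>Q. is_prime_ideal Q \<and> I \<subseteq> Q \<and> Q \<subseteq> P \<longrightarrow> Q = P)}"

text \<open>Contraction of the localization: I S_P \<inter> S = {f. \<exists>s\<notin>P. s f \<in> I}.\<close>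
definition loc_contr :: "('a::comm_ring_1) set \<Rightarrow> 'a set \<Rightarrow> 'a set" where
  "loc_contr I P = {f. \<exists>s. s \<notin> P \<and> s * f \<in> I}"

definition symb_power1 :: "('a::comm_ring_1) set \<Rightarrow> 'a set" where
  "symb_power1 I = (\<Inter>P\<in>min_primes I. loc_contr I P)"

definition is_monomial_ideal :: "('v, 'k::comm_ring_1) mpoly set \<Rightarrow> bool" where
  "is_monomial_ideal I \<longleftrightarrow> (\<exists>G. I = ideal_gen (monom_of ` G))"

definition mdvd :: "('v \<Rightarrow>\<^sub>0 nat) \<Rightarrow> ('v \<Rightarrow>\<^sub>0 nat) \<Rightarrow> bool" where
  "mdvd a b \<longleftrightarrow> (\<forall>v. Poly_Mapping.lookup a v \<le> Poly_Mapping.lookup b v)"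

definition min_gens :: "('v, 'k::comm_ring_1) mpoly set \<Rightarrow> ('v \<Rightarrow>\<^sub>0 nat) set" where
  "min_gens I = {m. monom_of m \<in> I \<and> (\<forall>m'. monom_of m' \<in> I \<and> mdvd m' m \<longrightarrow> m' = m)}"

definition support2 :: "('v, 'k::comm_ring_1) mpoly set \<Rightarrow> bool" where
  "support2 I \<longleftrightarrow> is_monomial_ideal I \<and> (\<forall>m\<in>min_gens I. card (Poly_Mapping.keys m) = 2)"

text \<open>Underlying simple graph G(I).\<close>
definition gadj :: "('v, 'k::comm_ring_1) mpoly set \<Rightarrow> 'v \<Rightarrow> 'v \<Rightarrow> bool" where
  "gadj I u w \<longleftrightarrow> u \<noteq> w \<and> (\<exists>m\<in>min_gens I. Poly_Mapping.keys m = {u, w})"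

definition alpha :: "('v, 'k::comm_ring_1) mpoly set \<Rightarrow> 'v \<Rightarrow> 'v \<Rightarrow> nat" where
  "alpha I u w = card {m\<in>min_gens I. Poly_Mapping.keys m = {u, w}}"

definition has_cycle_len :: "('v \<Rightarrow> 'v \<Rightarrow> bool) \<Rightarrow> nat \<Rightarrow> bool" where
  "has_cycle_len E k \<longleftrightarrow> k \<ge> 3 \<and> (\<exists>xs. length xs = k \<and> distinct xs \<and>
      (\<forall>i. Suc i < k \<longrightarrow> E (xs ! i) (xs ! Suc i)) \<and> E (xs ! (k - 1)) (xs ! 0))"

text \<open>girth(E) \<ge> g: no cycle of length < g (acyclic graphs have infinite girth).\<close>
definition girth_ge :: "('v \<Rightarrow> 'v \<Rightarrow> bool) \<Rightarrow> nat \<Rightarrow> bool" where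
  "girth_ge E g \<longleftrightarrow> (\<forall>k. k < g \<longrightarrow> \<not> has_cycle_len E k)"

definition is_leaf :: "('v \<Rightarrow> 'v \<Rightarrow> bool) \<Rightarrow> 'v \<Rightarrow> bool" where
  "is_leaf E v \<longleftrightarrow> card {w. E v w} = 1"

definition walk_of_len :: "('v \<Rightarrow> 'v \<Rightarrow> bool) \<Rightarrow> 'v \<Rightarrow> 'v \<Rightarrow> nat \<Rightarrow> bool" where
  "walk_of_len E x y k \<longleftrightarrow> (\<exists>xs. length xs = Suc k \<and> hd xs = x \<and> last xs = y \<and>
      (\<forall>i. Suc i < length xs \<longrightarrow> E (xs ! i) (xs ! Suc i)))"

text \<open>Graph distance (\<infinity> if no path).\<close>
definition gdist :: "('v \<Rightarrow> 'v \<Rightarrow> bool) \<Rightarrow> 'v \<Rightarrow> 'v \<Rightarrow> enat" where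
  "gdist E x y = (INF k\<in>{k. walk_of_len E x y k}. enat k)"

end

theory Submission
  imports Defs
begin

lemma kappa_exists:
  "\<exists>\<kappa> :: ('v::finite \<Rightarrow>\<^sub>0 nat) \<Rightarrow> (nat \<Rightarrow>\<^sub>0 nat). inj \<kappa> \<and> (\<forall>x y. \<kappa> (x + y) = \<kappa> x + \<kappa> y)"
proof -
  obtain h :: "'v \<Rightarrow> nat" and n where h: "inj_on h UNIV"
    using finite_imp_inj_to_nat_seg[OF finite_UNIV[where 'a='v]] by blast
  define \<kappa> where "\<kappa> m = (\<Sum>v\<in>UNIV. Poly_Mapping.single (h v) (Poly_Mapping.lookup m v))" for m :: "'v \<Rightarrow>\<^sub>0 nat"
  have lk: "Poly_Mapping.lookup (\<kappa> m) (h v) = Poly_Mapping.lookup m v" for m v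
  proof -
    have "Poly_Mapping.lookup (\<kappa> m) (h v) = (\<Sum>w\<in>UNIV. if w = v then Poly_Mapping.lookup m w else 0)"
      unfolding \<kappa>_def lookup_sum
      by (intro sum.cong refl) (use h in \<open>auto simp: lookup_single when_def inj_on_def\<close>)
    also have "\<dots> = Poly_Mapping.lookup m v" by simp
    finally show ?thesis .
  qed
  have "inj \<kappa>"
  proof (rule injI)
    fix x y assume "\<kappa> x = \<kappa> y"
    then have "Poly_Mapping.lookup x v = Poly_Mapping.lookup y v" for v by (metis lk)
    then show "x = y" by (intro poly_mapping_eqI) auto
  qed
  moreover have "\<kappa> (x + y) = \<kappa> x + \<kappa> y" for x y
    unfolding \<kappa>_def by (simp add: lookup_add single_add sum.distrib)
  ultimately show ?thesis by blast
qed

lemma mp_no_zd: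
  fixes a b :: "('v::finite \<Rightarrow>\<^sub>0 nat) \<Rightarrow>\<^sub>0 'k::field"
  assumes "a \<noteq> 0" "b \<noteq> 0"
  shows "a * b \<noteq> 0"
proof -
  obtain \<kappa> :: "('v \<Rightarrow>\<^sub>0 nat) \<Rightarrow> (nat \<Rightarrow>\<^sub>0 nat)" where inj: "inj \<kappa>" and add: "\<And>x y. \<kappa> (x + y) = \<kappa> x + \<kappa> y"
    using kappa_exists by blast
  define f where "f = Poly_Mapping.lookup a"
  define g where "g = Poly_Mapping.lookup b"
  define F where "F = {x. f x \<noteq> 0}"
  define G where "G = {x. g x \<noteq> 0}"
  have fF: "finite F" "finite G" unfolding F_def G_def f_def g_def by simp_all
  have neF: "F \<noteq> {}" "G \<noteq> {}" using assms unfolding F_def G_def f_def g_def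
    by (auto, metis lookup_zero poly_mapping_eqI, metis lookup_zero poly_mapping_eqI)
  have "Max (\<kappa> ` F) \<in> \<kappa> ` F" using fF(1) neF(1) by (intro Max_in) auto
  then obtain a0 where a0F: "a0 \<in> F" and a0M: "\<kappa> a0 = Max (\<kappa> ` F)" by (metis imageE)
  have a0: "a0 \<in> F" "\<And>x. x \<in> F \<Longrightarrow> \<kappa> x \<le> \<kappa> a0"
    using a0F apply simp
    unfolding a0M by (rule Max_ge) (use fF(1) in auto)
  have "Max (\<kappa> ` G) \<in> \<kappa> ` G" using fF(2) neF(2) by (intro Max_in) auto
  then obtain b0 where b0G: "b0 \<in> G" and b0M: "\<kappa> b0 = Max (\<kappa> ` G)" by (metis imageE)
  have b0: "b0 \<in> G" "\<And>x. x \<in> G \<Longrightarrow> \<kappa> x \<le> \<kappa> b0"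
    using b0G apply simp
    unfolding b0M by (rule Max_ge) (use fF(2) in auto)
  define q where "q = a0 + b0"
  have key: "x = a0 \<and> y = b0" if "x \<in> F" "y \<in> G" "q = x + y" for x y
  proof -
    have k: "\<kappa> x + \<kappa> y = \<kappa> a0 + \<kappa> b0" using that add unfolding q_def by metis
    have "\<kappa> x = \<kappa> a0"
    proof (rule ccontr)
      assume "\<kappa> x \<noteq> \<kappa> a0"
      then have "\<kappa> x < \<kappa> a0" using a0(2)[OF that(1)] by simp
      then have "\<kappa> x + \<kappa> y < \<kappa> a0 + \<kappa> b0" using b0(2)[OF that(2)] by (rule add_less_le_mono)
      with k show False by simp
    qed
    moreover then have "\<kappa> y = \<kappa> b0" using k by simp
    ultimately show ?thesis using inj by (simp add: inj_eq)
  qed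
  have "prod_fun f g q = (\<Sum>(x, y). f x * g y when q = x + y)"
    by (rule prod_fun_unfold_prod) (simp_all add: f_def g_def)
  also have "\<dots> = (\<Sum>xy. if xy = (a0, b0) then f (fst xy) * g (snd xy) else 0)"
  proof (rule Sum_any.cong)
    fix xy :: "('v \<Rightarrow>\<^sub>0 nat) \<times> ('v \<Rightarrow>\<^sub>0 nat)"
    obtain x y where xy: "xy = (x, y)" by (cases xy)
    show "(case xy of (x, y) \<Rightarrow> f x * g y when q = x + y) = (if xy = (a0, b0) then f (fst xy) * g (snd xy) else 0)"
    proof (cases "xy = (a0, b0)")
      case True
      then show ?thesis by (simp add: q_def)
    next
      case False
      have "f x * g y = 0 \<or> q \<noteq> x + y"
      proof (rule ccontr)
        assume "\<not> (f x * g y = 0 \<or> q \<noteq> x + y)"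
        then have "x \<in> F" "y \<in> G" "q = x + y" by (auto simp: F_def G_def)
        from key[OF this] False xy show False by simp
      qed
      then show ?thesis using False xy by (auto simp: when_def)
    qed
  qed
  also have "\<dots> = f a0 * g b0" by simp
  also have "\<dots> \<noteq> 0" using a0(1) b0(1) by (simp add: F_def G_def)
  finally have "Poly_Mapping.lookup (a * b) q \<noteq> 0"
    by (simp add: times_poly_mapping.rep_eq f_def g_def)
  then show ?thesis by auto
qed


definition var :: "'v \<Rightarrow> ('v, 'k::comm_ring_1) mpoly" where
  "var v = monom_of (Poly_Mapping.single v 1)"

definition proj :: "'v set \<Rightarrow> ('v, 'k::comm_ring_1) mpoly \<Rightarrow> ('v, 'k) mpoly" where
  "proj C p = Abs_poly_mapping (\<lambda>m. if Poly_Mapping.keys m \<inter> C = {} then Poly_Mapping.lookup p m else 0)"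

definition avoidQ :: "'v set \<Rightarrow> ('v, 'k::comm_ring_1) mpoly set" where
  "avoidQ C = {p. proj C p = 0}"

lemma lookup_proj:
  "Poly_Mapping.lookup (proj C p) m = (if Poly_Mapping.keys m \<inter> C = {} then Poly_Mapping.lookup p m else 0)"
proof -
  have "finite {m. (if Poly_Mapping.keys m \<inter> C = {} then Poly_Mapping.lookup p m else 0) \<noteq> 0}"
    by (rule finite_subset[OF _ finite_lookup[of p]]) auto
  then show ?thesis unfolding proj_def by simp
qed

lemma keys_add_nat: "Poly_Mapping.keys (x + y) = Poly_Mapping.keys x \<union> Poly_Mapping.keys (y :: 'v \<Rightarrow>\<^sub>0 nat)"
  by (auto simp: in_keys_iff lookup_add)

lemma lookup_times:
  fixes a b :: "('v, 'k::comm_ring_1) mpoly"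
  shows "Poly_Mapping.lookup (a * b) k =
    (\<Sum>(x, y). Poly_Mapping.lookup a x * Poly_Mapping.lookup b y when k = x + y)"
  unfolding times_poly_mapping.rep_eq by (rule prod_fun_unfold_prod) simp_all

lemma proj_mult: "proj C (a * b) = proj C a * proj C (b :: ('v, 'k::comm_ring_1) mpoly)"
proof (rule poly_mapping_eqI)
  fix k
  show "Poly_Mapping.lookup (proj C (a * b)) k = Poly_Mapping.lookup (proj C a * proj C b) k"
  proof (cases "Poly_Mapping.keys k \<inter> C = {}")
    case True
    have "Poly_Mapping.lookup (proj C (a * b)) k =
      (\<Sum>(x, y). Poly_Mapping.lookup a x * Poly_Mapping.lookup b y when k = x + y)"
      using True by (simp add: lookup_proj lookup_times)
    also have "\<dots> = Poly_Mapping.lookup (proj C a * proj C b) k"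
      unfolding lookup_times
      by (rule Sum_any.cong) (use True in \<open>auto simp: lookup_proj when_def keys_add_nat; blast\<close>)
    finally show ?thesis .
  next
    case False
    have "Poly_Mapping.lookup (proj C a * proj C b) k = (\<Sum>xy :: ('v \<Rightarrow>\<^sub>0 nat) \<times> ('v \<Rightarrow>\<^sub>0 nat). 0)"
      unfolding lookup_times
      by (rule Sum_any.cong) (use False in \<open>auto simp: lookup_proj when_def keys_add_nat split: if_splits\<close>)
    then show ?thesis using False by (simp add: lookup_proj)
  qed
qed

lemma proj_add: "proj C (a + b) = proj C a + proj C (b :: ('v, 'k::comm_ring_1) mpoly)"
  by (rule poly_mapping_eqI) (simp add: lookup_proj lookup_add)

lemma proj_zero: "proj C 0 = 0"
  by (rule poly_mapping_eqI) (simp add: lookup_proj)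

lemma proj_one: "proj C 1 \<noteq> (0 :: ('v, 'k::comm_ring_1) mpoly)"
proof -
  have "Poly_Mapping.lookup (proj C (1 :: ('v, 'k) mpoly)) 0 = 1" by (simp add: lookup_proj)
  then show ?thesis by auto
qed

lemma avoidQ_prime:
  "is_prime_ideal (avoidQ C :: ('v::finite, 'k::field) mpoly set)"
proof -
  have "1 \<notin> (avoidQ C :: ('v, 'k) mpoly set)" using proj_one by (simp add: avoidQ_def)
  then have nu: "avoidQ C \<noteq> (UNIV :: ('v, 'k) mpoly set)" by blast
  have id: "is_ideal (avoidQ C :: ('v, 'k) mpoly set)"
    unfolding is_ideal_def avoidQ_def by (simp add: proj_zero proj_add proj_mult)
  have pr: "a \<in> avoidQ C \<or> b \<in> avoidQ C" if "a * b \<in> avoidQ C" for a b :: "('v, 'k) mpoly"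
    using that mp_no_zd[of "proj C a" "proj C b"] unfolding avoidQ_def by (auto simp: proj_mult)
  show ?thesis unfolding is_prime_ideal_def using id nu pr by blast
qed


lemma ideal_gen_is_ideal: "is_ideal (ideal_gen G)"
  unfolding ideal_gen_def is_ideal_def by auto

lemma ideal_gen_sub: "G \<subseteq> ideal_gen G"
  unfolding ideal_gen_def by auto

lemma ideal_gen_least: "is_ideal J \<Longrightarrow> G \<subseteq> J \<Longrightarrow> ideal_gen G \<subseteq> J"
  unfolding ideal_gen_def by auto

lemma ideal_mult: "is_ideal J \<Longrightarrow> a \<in> J \<Longrightarrow> r * a \<in> J"
  unfolding is_ideal_def by auto

lemma ideal_mult2: "is_ideal J \<Longrightarrow> a \<in> J \<Longrightarrow> a * (r :: 'a :: comm_ring_1) \<in> J"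
  unfolding is_ideal_def by (metis mult.commute)

lemma ideal_sum:
  assumes J: "is_ideal J" and "finite A" and "\<And>a. a \<in> A \<Longrightarrow> f a \<in> J"
  shows "sum f A \<in> J"
  using assms(2,3)
proof (induction A rule: finite_induct)
  case empty then show ?case using J by (simp add: is_ideal_def)
next
  case (insert x F) then show ?case using J by (simp add: is_ideal_def)
qed

lemma lookup_pm: "Poly_Mapping.lookup (Abs_poly_mapping (f :: 'v::finite \<Rightarrow> nat)) = f"
  by simp

lemma monom_mult: "monom_of a * monom_of b = (monom_of (a + b) :: ('v, 'k::comm_ring_1) mpoly)"
  unfolding monom_of_def by (simp add: mult_single)

lemma keys_monom: "Poly_Mapping.keys (monom_of m :: ('v, 'k::comm_ring_1) mpoly) = {m}"
  unfolding monom_of_def by simp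

lemma mdvd_split:
  fixes g m :: "'v::finite \<Rightarrow>\<^sub>0 nat"
  assumes "mdvd g m"
  shows "m = Abs_poly_mapping (\<lambda>v. Poly_Mapping.lookup m v - Poly_Mapping.lookup g v) + g"
  using assms unfolding mdvd_def by (intro poly_mapping_eqI) (simp add: lookup_add)

lemma monom_dvd_in:
  fixes I :: "('v::finite, 'k::comm_ring_1) mpoly set"
  assumes "is_ideal I" "monom_of g \<in> I" "mdvd g m"
  shows "monom_of m \<in> I"
proof -
  have "monom_of m = monom_of (Abs_poly_mapping (\<lambda>v. Poly_Mapping.lookup m v - Poly_Mapping.lookup g v)) * (monom_of g :: ('v, 'k) mpoly)"
    using mdvd_split[OF assms(3)] by (metis monom_mult)
  then show ?thesis using ideal_mult[OF assms(1,2)] by simp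
qed

definition deg :: "('v::finite \<Rightarrow>\<^sub>0 nat) \<Rightarrow> nat" where
  "deg m = (\<Sum>v\<in>UNIV. Poly_Mapping.lookup m v)"

lemma deg_add: "deg (a + b) = deg a + deg b"
  unfolding deg_def by (simp add: lookup_add sum.distrib)

lemma deg_single1: "deg (Poly_Mapping.single v 1) = 1"
proof -
  have "deg (Poly_Mapping.single v 1) = (\<Sum>w\<in>UNIV. if v = w then 1 else 0)"
    unfolding deg_def by (intro sum.cong) (auto simp: lookup_single when_def)
  also have "\<dots> = 1" by simp
  finally show ?thesis .
qed

lemma mdvd_deg_eq:
  assumes "mdvd a b" "deg b \<le> deg a"
  shows "a = b"
proof -
  have le: "\<And>v. Poly_Mapping.lookup a v \<le> Poly_Mapping.lookup b v" using assms(1) unfolding mdvd_def by auto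
  have "Poly_Mapping.lookup a v = Poly_Mapping.lookup b v" for v
  proof (rule ccontr)
    assume "Poly_Mapping.lookup a v \<noteq> Poly_Mapping.lookup b v"
    then have "Poly_Mapping.lookup a v < Poly_Mapping.lookup b v" using le[of v] by simp
    then have "deg a < deg b" unfolding deg_def
      by (intro sum_strict_mono_ex1) (auto simp: le)
    with assms(2) show False by simp
  qed
  then show ?thesis by (intro poly_mapping_eqI) auto
qed

lemma mdvd_trans: "mdvd a b \<Longrightarrow> mdvd b c \<Longrightarrow> mdvd a c"
  unfolding mdvd_def using le_trans by blast

lemma exists_min_gen:
  fixes I :: "('v::finite, 'k::comm_ring_1) mpoly set"
  assumes "monom_of m \<in> I"
  shows "\<exists>g\<in>min_gens I. mdvd g m"
proof -
  let ?S = "\<lambda>g. monom_of g \<in> I \<and> mdvd g m"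
  have "?S m" using assms by (simp add: mdvd_def)
  then obtain g where g: "?S g" and gmin: "\<And>y. ?S y \<Longrightarrow> deg g \<le> deg y"
    using ex_has_least_nat[of ?S m deg] by blast
  have "g \<in> min_gens I"
    unfolding min_gens_def
  proof (safe)
    show "monom_of g \<in> I" using g by simp
  next
    fix m' assume "monom_of m' \<in> I" "mdvd m' g"
    then have "?S m'" using g mdvd_trans by blast
    then show "m' = g" using gmin \<open>mdvd m' g\<close> mdvd_deg_eq by blast
  qed
  then show ?thesis using g by blast
qed

lemma prime_not_univ_one: "is_prime_ideal P \<Longrightarrow> 1 \<notin> P"
proof
  assume P: "is_prime_ideal P" and one: "1 \<in> P"
  have "r \<in> P" for r using P one unfolding is_prime_ideal_def is_ideal_def
    by (metis mult.right_neutral)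
  then have "P = UNIV" by blast
  with P show False unfolding is_prime_ideal_def by blast
qed

lemma monom_in_prime:
  fixes P :: "('v::finite, 'k::comm_ring_1) mpoly set"
  assumes P: "is_prime_ideal P"
  shows "monom_of m \<in> P \<Longrightarrow> \<exists>v\<in>Poly_Mapping.keys m. var v \<in> P"
proof (induction "deg m" arbitrary: m rule: less_induct)
  case less
  show ?case
  proof (cases "m = 0")
    case True
    then have "monom_of m = (1 :: ('v, 'k) mpoly)" unfolding monom_of_def by simp
    then show ?thesis using less.prems prime_not_univ_one[OF P] by simp
  next
    case False
    then obtain v where v: "v \<in> Poly_Mapping.keys m" using keys_eq_empty by blast
    then have dv: "mdvd (Poly_Mapping.single v 1) m"
      unfolding mdvd_def by (auto simp: lookup_single when_def in_keys_iff)
    define d where "d = Abs_poly_mapping (\<lambda>w. Poly_Mapping.lookup m w - Poly_Mapping.lookup (Poly_Mapping.single v 1) w)"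
    have md: "m = d + Poly_Mapping.single v 1" using mdvd_split[OF dv] d_def by simp
    have "monom_of m = monom_of d * (var v :: ('v, 'k) mpoly)"
      unfolding var_def by (subst md) (simp add: monom_mult)
    then have "monom_of d * (var v :: ('v, 'k) mpoly) \<in> P" using less.prems by simp
    then have "monom_of d \<in> P \<or> var v \<in> P" using P unfolding is_prime_ideal_def by blast
    then show ?thesis
    proof
      assume "var v \<in> P" then show ?thesis using v by blast
    next
      assume dP: "monom_of d \<in> P"
      have "deg m = deg d + 1" using md deg_add deg_single1 by metis
      then have "deg d < deg m" by simp
      from less.hyps[OF this dP] obtain w where "w \<in> Poly_Mapping.keys d" "var w \<in> P" by blast
      moreover have "Poly_Mapping.keys d \<subseteq> Poly_Mapping.keys m" by (subst md) (auto simp: keys_add_nat)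
      ultimately show ?thesis by blast
    qed
  qed
qed


lemma poly_expand:
  "p = (\<Sum>m\<in>Poly_Mapping.keys p. Poly_Mapping.single m (Poly_Mapping.lookup p m))"
  by (rule poly_mapping_eqI) (simp add: lookup_sum lookup_single when_def in_keys_iff)

lemma avoidQ_sub_prime:
  fixes P :: "('v::finite, 'k::comm_ring_1) mpoly set"
  assumes P: "is_ideal P" and C: "\<And>v. v \<in> C \<Longrightarrow> var v \<in> P"
  shows "avoidQ C \<subseteq> P"
proof
  fix p :: "('v, 'k) mpoly" assume "p \<in> avoidQ C"
  then have p0: "proj C p = 0" by (simp add: avoidQ_def)
  have "(\<Sum>m\<in>Poly_Mapping.keys p. Poly_Mapping.single m (Poly_Mapping.lookup p m)) \<in> P"
  proof (rule ideal_sum[OF P finite_keys])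
    fix m assume m: "m \<in> Poly_Mapping.keys p"
    have "Poly_Mapping.lookup (proj C p) m = 0" using p0 by simp
    then have "Poly_Mapping.keys m \<inter> C \<noteq> {}" using m by (auto simp: lookup_proj in_keys_iff split: if_splits)
    then obtain v where v: "v \<in> Poly_Mapping.keys m" "v \<in> C" by blast
    then have dv: "mdvd (Poly_Mapping.single v 1) m"
      unfolding mdvd_def by (auto simp: lookup_single when_def in_keys_iff)
    define d where "d = Abs_poly_mapping (\<lambda>w. Poly_Mapping.lookup m w - Poly_Mapping.lookup (Poly_Mapping.single v 1) w)"
    have md: "m = d + Poly_Mapping.single v 1" using mdvd_split[OF dv] d_def by simp
    have "Poly_Mapping.single m (Poly_Mapping.lookup p m) = Poly_Mapping.single d (Poly_Mapping.lookup p m) * (var v :: ('v, 'k) mpoly)"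
      unfolding var_def monom_of_def by (subst md) (simp add: mult_single)
    then show "Poly_Mapping.single m (Poly_Mapping.lookup p m) \<in> P"
      using ideal_mult[OF P C[OF v(2)]] by simp
  qed
  then show "p \<in> P" using poly_expand[of p] by simp
qed

lemma gadj_sym: "gadj I u w \<Longrightarrow> gadj I w u"
  unfolding gadj_def by (auto simp: insert_commute)

lemma gadj_irrefl: "\<not> gadj I u u"
  unfolding gadj_def by auto

lemma min_gen_edge:
  assumes "support2 I" "g \<in> min_gens I"
  shows "\<exists>u w. Poly_Mapping.keys g = {u, w} \<and> gadj I u w"
proof -
  have "card (Poly_Mapping.keys g) = 2" using assms unfolding support2_def by auto
  then obtain u w where "u \<noteq> w" "Poly_Mapping.keys g = {u, w}" by (auto simp: card_2_iff)
  then show ?thesis using assms(2) unfolding gadj_def by blast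
qed

lemma mdvd_keys: "mdvd a b \<Longrightarrow> Poly_Mapping.keys a \<subseteq> Poly_Mapping.keys b"
  unfolding mdvd_def by (auto simp: in_keys_iff) (metis le_zero_eq not_gr_zero)

lemma I_sub_avoidQ:
  fixes I :: "('v::finite, 'k::field) mpoly set"
  assumes S: "support2 I" and C: "\<And>u w. gadj I u w \<Longrightarrow> u \<in> C \<or> w \<in> C"
  shows "I \<subseteq> avoidQ C"
proof -
  obtain G where G: "I = ideal_gen (monom_of ` G)" using S unfolding support2_def is_monomial_ideal_def by blast
  have "(monom_of g :: ('v, 'k) mpoly) \<in> avoidQ C" if g: "g \<in> G" for g
  proof -
    have "monom_of g \<in> I" using G ideal_gen_sub g by blast
    then obtain g' where g': "g' \<in> min_gens I" "mdvd g' g" using exists_min_gen by blast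
    then obtain u w where uw: "Poly_Mapping.keys g' = {u, w}" "gadj I u w" using min_gen_edge[OF S] by blast
    then have "Poly_Mapping.keys g \<inter> C \<noteq> {}" using C[OF uw(2)] mdvd_keys[OF g'(2)] by blast
    then have "proj C (monom_of g :: ('v, 'k) mpoly) = 0"
      by (intro poly_mapping_eqI) (auto simp: lookup_proj monom_of_def lookup_single when_def)
    then show ?thesis by (simp add: avoidQ_def)
  qed
  moreover have "is_ideal (avoidQ C :: ('v, 'k) mpoly set)" using avoidQ_prime[of C] unfolding is_prime_ideal_def by blast
  ultimately have "ideal_gen (monom_of ` G) \<subseteq> (avoidQ C :: ('v, 'k) mpoly set)"
    by (intro ideal_gen_least) auto
  then show ?thesis using G by simp
qed

lemma minprime_nbr:
  fixes I :: "('v::finite, 'k::field) mpoly set"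
  assumes S: "support2 I" and P: "P \<in> min_primes I" and i: "var i \<in> P"
  shows "\<exists>k. gadj I i k \<and> var k \<notin> P"
proof (rule ccontr)
  assume "\<not> ?thesis"
  then have nb: "\<And>k. gadj I i k \<Longrightarrow> var k \<in> P" by blast
  have Pp: "is_prime_ideal P" "I \<subseteq> P" and Pmin: "\<And>Q. is_prime_ideal Q \<Longrightarrow> I \<subseteq> Q \<Longrightarrow> Q \<subseteq> P \<Longrightarrow> Q = P"
    using P unfolding min_primes_def by auto
  define C where "C = {v. var v \<in> P} - {i}"
  have cov: "u \<in> C \<or> w \<in> C" if uw: "gadj I u w" for u w
  proof -
    obtain g where g: "g \<in> min_gens I" "Poly_Mapping.keys g = {u, w}" using uw unfolding gadj_def by blast
    have "monom_of g \<in> I" using g(1) unfolding min_gens_def by blast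
    then have "monom_of g \<in> P" using Pp(2) by blast
    from monom_in_prime[OF Pp(1) this] obtain v where v0: "v \<in> Poly_Mapping.keys g" "var v \<in> P" by blast
    have v: "v \<in> {u, w}" "var v \<in> P" using v0 g(2) by simp_all
    show ?thesis
    proof (cases "v = i")
      case False
      then have "v \<in> C" using v unfolding C_def by blast
      then show ?thesis using v(1) by blast
    next
      case True
      have "u = i \<or> w = i" using v(1) True by blast
      then show ?thesis
      proof
        assume ui: "u = i"
        then have e: "gadj I i w" using uw by simp
        have w1: "var w \<in> P" by (rule nb[OF e])
        have w2: "w \<noteq> i" using e gadj_irrefl[of I i] by (cases "w = i") simp_all
        show ?thesis unfolding C_def using w1 w2 by simp
      next
        assume wi: "w = i"
        have e: "gadj I i u" using gadj_sym[OF uw] wi by simp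
        have u1: "var u \<in> P" by (rule nb[OF e])
        have u2: "u \<noteq> i" using e gadj_irrefl[of I i] by (cases "u = i") simp_all
        show ?thesis unfolding C_def using u1 u2 by simp
      qed
    qed
  qed
  have sub1: "I \<subseteq> avoidQ C" by (rule I_sub_avoidQ[OF S cov])
  have sub2: "avoidQ C \<subseteq> P" using Pp(1) by (intro avoidQ_sub_prime) (auto simp: C_def is_prime_ideal_def)
  have eq: "avoidQ C = P" using Pmin[OF avoidQ_prime sub1 sub2] .
  have "Poly_Mapping.lookup (proj C (var i :: ('v, 'k) mpoly)) (Poly_Mapping.single i 1) = 1"
    by (simp add: lookup_proj var_def monom_of_def C_def)
  then have "(var i :: ('v, 'k) mpoly) \<notin> avoidQ C" unfolding avoidQ_def by (metis lookup_zero one_neq_zero mem_Collect_eq)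
  with eq i show False by simp
qed


lemma cyc3: "E a b \<Longrightarrow> E b c \<Longrightarrow> E c a \<Longrightarrow> distinct [a, b, c] \<Longrightarrow> has_cycle_len E 3"
  unfolding has_cycle_len_def
  apply (rule conjI, simp)
  apply (rule exI[of _ "[a, b, c]"])
  apply (auto simp: less_Suc_eq numeral_eq_Suc)
  done

lemma cyc4: "E a b \<Longrightarrow> E b c \<Longrightarrow> E c d \<Longrightarrow> E d a \<Longrightarrow> distinct [a, b, c, d] \<Longrightarrow> has_cycle_len E 4"
  unfolding has_cycle_len_def
  apply (rule conjI, simp)
  apply (rule exI[of _ "[a, b, c, d]"])
  apply (auto simp: less_Suc_eq numeral_eq_Suc)
  done

lemma cyc5: "E a b \<Longrightarrow> E b c \<Longrightarrow> E c d \<Longrightarrow> E d e \<Longrightarrow> E e a \<Longrightarrow> distinct [a, b, c, d, e] \<Longrightarrow> has_cycle_len E 5"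
  unfolding has_cycle_len_def
  apply (rule conjI, simp)
  apply (rule exI[of _ "[a, b, c, d, e]"])
  apply (auto simp: less_Suc_eq numeral_eq_Suc)
  done

lemma walk1: "E x y \<Longrightarrow> walk_of_len E x y 1"
  unfolding walk_of_len_def
  apply (rule exI[of _ "[x, y]"])
  apply simp
  done

lemma gdist_adj: "E x y \<Longrightarrow> gdist E x y \<le> 1"
proof -
  assume e: "E x y"
  have "gdist E x y \<le> enat 1" unfolding gdist_def by (rule INF_lower) (use walk1[of E x y, OF e] in blast)
  then show ?thesis by (subst one_enat_def)
qed

lemma nonleaf_other:
  fixes E :: "'v::finite \<Rightarrow> 'v \<Rightarrow> bool"
  assumes "E k i" "\<not> is_leaf E k"
  shows "\<exists>m. E k m \<and> m \<noteq> i"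
proof (rule ccontr)
  assume a: "\<not> ?thesis"
  have "{w. E k w} = {i}"
  proof
    show "{w. E k w} \<subseteq> {i}" using a by blast
    show "{i} \<subseteq> {w. E k w}" using assms(1) by blast
  qed
  then have "card {w. E k w} = 1" by simp
  with assms(2) show False by (simp add: is_leaf_def)
qed

lemma s_notin:
  fixes P :: "('v::finite, 'k::comm_ring_1) mpoly set"
  assumes "is_prime_ideal P" "var k \<notin> P"
  shows "monom_of (Poly_Mapping.single k n) \<notin> P"
proof
  assume "monom_of (Poly_Mapping.single k n) \<in> P"
  from monom_in_prime[OF assms(1) this] obtain v where "v \<in> Poly_Mapping.keys (Poly_Mapping.single k n)" "var v \<in> P" by blast
  then show False using assms(2) by (auto split: if_splits)
qed

lemma lookup_out: "Poly_Mapping.keys g = {u, w} \<Longrightarrow> v \<noteq> u \<Longrightarrow> v \<noteq> w \<Longrightarrow> Poly_Mapping.lookup g v = 0"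
proof -
  assume "Poly_Mapping.keys g = {u, w}" "v \<noteq> u" "v \<noteq> w"
  then have "v \<notin> Poly_Mapping.keys g" by simp
  then show ?thesis by (simp add: in_keys_iff)
qed

lemma main_one_side:
  fixes I :: "('v::finite, 'k::field) mpoly set"
  assumes S: "support2 I" and girth: "girth_ge (gadj I) 6" and ij: "gadj I i j"
    and alpha: "alpha I i j \<ge> 2"
    and leaf: "\<forall>l. is_leaf (gadj I) l \<longrightarrow> gdist (gadj I) i l \<ge> 2"
  shows "symb_power1 I \<noteq> I"
proof -
  let ?E = "gadj I"
  have no3: "\<not> has_cycle_len ?E 3" and no4: "\<not> has_cycle_len ?E 4" and no5: "\<not> has_cycle_len ?E 5"
    using girth unfolding girth_ge_def by auto
  have Iid: "is_ideal I" using S ideal_gen_is_ideal unfolding support2_def is_monomial_ideal_def by blast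
  have sym: "\<And>u w. ?E u w \<Longrightarrow> ?E w u" by (rule gadj_sym)
  have irr: "\<And>u. \<not> ?E u u" by (rule gadj_irrefl)
  define EG where "EG = {m\<in>min_gens I. Poly_Mapping.keys m = {i, j}}"
  have cardEG: "card EG \<ge> 2" using alpha unfolding alpha_def EG_def by simp
  then have EGne: "EG \<noteq> {}" by auto
  then obtain g0 where "g0 \<in> EG" by blast
  obtain g1 where g1: "g1 \<in> EG" and g1min: "\<And>h. h \<in> EG \<Longrightarrow> Poly_Mapping.lookup g1 i \<le> Poly_Mapping.lookup h i"
    using ex_has_least_nat[of "\<lambda>h. h \<in> EG" g0 "\<lambda>h. Poly_Mapping.lookup h i"] \<open>g0 \<in> EG\<close> by blast
  obtain g2 where g2: "g2 \<in> EG" and g2min: "\<And>h. h \<in> EG \<Longrightarrow> Poly_Mapping.lookup g2 j \<le> Poly_Mapping.lookup h j"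
    using ex_has_least_nat[of "\<lambda>h. h \<in> EG" g0 "\<lambda>h. Poly_Mapping.lookup h j"] \<open>g0 \<in> EG\<close> by blast
  define A where "A = Poly_Mapping.lookup g1 i"
  define B where "B = Poly_Mapping.lookup g2 j"
  have edge_free: "\<not> (Poly_Mapping.lookup g i \<le> A \<and> Poly_Mapping.lookup g j \<le> B)" if g: "g \<in> EG" for g
  proof
    assume gle: "Poly_Mapping.lookup g i \<le> A \<and> Poly_Mapping.lookup g j \<le> B"
    have kg: "Poly_Mapping.keys g = {i, j}" using g unfolding EG_def by simp
    have gI: "monom_of g \<in> I" using g unfolding EG_def min_gens_def by simp
    have "h = g" if h: "h \<in> EG" for h
    proof -
      have hmin: "\<forall>m'. monom_of m' \<in> I \<and> mdvd m' h \<longrightarrow> m' = h"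
        using h unfolding EG_def min_gens_def by simp
      have "mdvd g h" unfolding mdvd_def
      proof
        fix v
        show "Poly_Mapping.lookup g v \<le> Poly_Mapping.lookup h v"
        proof (cases "v = i")
          case True
          have "A \<le> Poly_Mapping.lookup h i" unfolding A_def by (rule g1min[OF h])
          then show ?thesis using gle True by simp
        next
          case vi: False
          show ?thesis
          proof (cases "v = j")
            case True
            have "B \<le> Poly_Mapping.lookup h j" unfolding B_def by (rule g2min[OF h])
            then show ?thesis using gle True by simp
          next
            case False
            have "Poly_Mapping.lookup g v = 0" by (rule lookup_out[OF kg vi False])
            then show ?thesis by simp
          qed
        qed
      qed
      then have "g = h" using hmin gI by blast
      then show ?thesis by simp
    qed
    then have "EG \<subseteq> {g}" by blast
    then have "card EG \<le> card {g}" by (intro card_mono) simp_all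
    then have "card EG \<le> 1" by simp
    with cardEG show False by simp
  qed
  define M where "M = {m. \<exists>k. ?E i k \<and> k \<noteq> j \<and> ?E k m \<and> m \<noteq> i}"
  have ij_ne: "i \<noteq> j" using ij irr by blast
  have Mj: "m \<noteq> j" if mM: "m \<in> M" for m
  proof
    assume "m = j"
    obtain k where k: "?E i k" "k \<noteq> j" "?E k m" using mM unfolding M_def by blast
    have "has_cycle_len ?E 3"
      using cyc3[of ?E i k j] k \<open>m = j\<close> sym[OF ij] irr ij_ne by (metis distinct_length_2_or_more distinct_singleton)
    with no3 show False by simp
  qed
  have Mi: "m \<noteq> i" if mM: "m \<in> M" for m using mM unfolding M_def by blast
  have Mni: "\<not> ?E i m" if mM: "m \<in> M" for m
  proof
    assume e: "?E i m"
    obtain k where k: "?E i k" "k \<noteq> j" "?E k m" "m \<noteq> i" using mM unfolding M_def by blast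
    have "distinct [i, k, m]" using k irr by auto
    then have "has_cycle_len ?E 3" using cyc3[of ?E i k m] k sym[OF e] by blast
    with no3 show False by simp
  qed
  have Mnj: "\<not> ?E j m" if mM: "m \<in> M" for m
  proof
    assume e: "?E j m"
    obtain k where k: "?E i k" "k \<noteq> j" "?E k m" "m \<noteq> i" using mM unfolding M_def by blast
    have "distinct [i, k, m, j]" using k irr ij_ne Mj[OF mM] by auto
    then have "has_cycle_len ?E 4" using cyc4[of ?E i k m j] k sym[OF e] sym[OF ij] by blast
    with no4 show False by simp
  qed
  have MM: "\<not> ?E m m'" if mM1: "m \<in> M" and mM2: "m' \<in> M" for m m'
  proof
    assume e: "?E m m'"
    obtain k where k: "?E i k" "k \<noteq> j" "?E k m" "m \<noteq> i" using mM1 unfolding M_def by blast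
    obtain k' where k': "?E i k'" "k' \<noteq> j" "?E k' m'" "m' \<noteq> i" using mM2 unfolding M_def by blast
    show False
    proof (cases "k = k'")
      case True
      have "distinct [k, m, m']" using k k' e irr True by auto
      then have "has_cycle_len ?E 3" using cyc3[of ?E k m m'] k k' e sym True by blast
      with no3 show False by simp
    next
      case kk: False
      show False
      proof (cases "k = m' \<or> k' = m")
        case True
        have "distinct [i, k, k']" using k k' irr kk by auto
        then have "has_cycle_len ?E 3" using cyc3[of ?E i k k'] k k' True sym by blast
        with no3 show False by simp
      next
        case False
        have "distinct [i, k, m, m', k']" using k k' irr kk False e by auto
        then have "has_cycle_len ?E 5" using cyc5[of ?E i k m m' k'] k k' e sym by blast
        with no5 show False by simp
      qed
    qed
  qed
  have Mni2: "\<not> ?E m i" if mM: "m \<in> M" for m using Mni[OF mM] sym by blast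
  have Mnj2: "\<not> ?E m j" if mM: "m \<in> M" for m using Mnj[OF mM] sym by blast
  define cg where "cg k m = (SOME g. g \<in> min_gens I \<and> Poly_Mapping.keys g = {k, m})" for k m
  have cg: "cg k m \<in> min_gens I \<and> Poly_Mapping.keys (cg k m) = {k, m}" if "?E k m" for k m
    unfolding cg_def using that unfolding gadj_def by (metis (mono_tags, lifting) someI_ex)
  define E0 where "E0 = Max (range (\<lambda>(k, m). Poly_Mapping.lookup (cg k m) m))"
  have E0: "Poly_Mapping.lookup (cg k m) m \<le> E0" for k m
    unfolding E0_def by (rule Max_ge) auto
  define F :: "'v \<Rightarrow>\<^sub>0 nat" where "F = Abs_poly_mapping (\<lambda>v. if v = i then A else if v = j then B else if v \<in> M then E0 else 0)"
  have lF: "Poly_Mapping.lookup F v = (if v = i then A else if v = j then B else if v \<in> M then E0 else 0)" for v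
    unfolding F_def by simp
  define f :: "('v, 'k) mpoly" where "f = monom_of F"
  have notin: "f \<notin> I"
  proof
    assume "f \<in> I"
    then obtain g where g: "g \<in> min_gens I" "mdvd g F" using exists_min_gen unfolding f_def by blast
    obtain u w where uw: "Poly_Mapping.keys g = {u, w}" "?E u w" using min_gen_edge[OF S g(1)] by blast
    have kF: "Poly_Mapping.keys F \<subseteq> {i, j} \<union> M" by (auto simp: in_keys_iff lF split: if_splits)
    have "u \<in> {i, j} \<union> M" "w \<in> {i, j} \<union> M" using mdvd_keys[OF g(2)] kF uw(1) by auto
    then have "{u, w} = {i, j}" using uw(2) irr Mni Mnj MM Mni2 Mnj2 by auto
    then have gEG: "g \<in> EG" using g(1) uw(1) unfolding EG_def by simp
    have "Poly_Mapping.lookup g i \<le> A" "Poly_Mapping.lookup g j \<le> B"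
      using g(2) unfolding mdvd_def by (metis lF ij_ne)+
    with edge_free[OF gEG] show False by simp
  qed
  have inloc: "f \<in> loc_contr I P" if P: "P \<in> min_primes I" for P
  proof -
    have Pp: "is_prime_ideal P" using P unfolding min_primes_def by auto
    have mi: "monom_of h \<in> I" if "h \<in> min_gens I" for h using that unfolding min_gens_def by auto
    have key: "f \<in> loc_contr I P" if "var k \<notin> P" "h \<in> min_gens I"
      "mdvd h (Poly_Mapping.single k (Poly_Mapping.lookup h k) + F)" for k h
    proof -
      have "monom_of (Poly_Mapping.single k (Poly_Mapping.lookup h k)) * f \<in> I"
        unfolding f_def monom_mult by (rule monom_dvd_in[OF Iid mi[OF that(2)] that(3)])
      then show ?thesis unfolding loc_contr_def using s_notin[OF Pp that(1)] by blast
    qed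
    have EGk: "Poly_Mapping.lookup h v = 0" if "h \<in> EG" "v \<noteq> i" "v \<noteq> j" for h v
    proof -
      have "Poly_Mapping.keys h = {i, j}" using that(1) unfolding EG_def by simp
      then show ?thesis by (rule lookup_out) (use that in simp_all)
    qed
    show ?thesis
    proof (cases "var j \<in> P")
      case False
      show ?thesis
      proof (rule key[OF False])
        show "g1 \<in> min_gens I" using g1 EG_def by simp
        show "mdvd g1 (Poly_Mapping.single j (Poly_Mapping.lookup g1 j) + F)"
          unfolding mdvd_def using EGk[OF g1] ij_ne by (auto simp: lookup_add lookup_single when_def lF A_def)
      qed
    next
      case jP: True
      show ?thesis
      proof (cases "var i \<in> P")
        case False
        show ?thesis
        proof (rule key[OF False])
          show "g2 \<in> min_gens I" using g2 EG_def by simp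
          show "mdvd g2 (Poly_Mapping.single i (Poly_Mapping.lookup g2 i) + F)"
            unfolding mdvd_def using EGk[OF g2] ij_ne by (auto simp: lookup_add lookup_single when_def lF B_def)
        qed
      next
        case True
        obtain k where k: "?E i k" "var k \<notin> P" using minprime_nbr[OF S P True] by blast
        have kj: "k \<noteq> j" using k jP by blast
        have "gdist ?E i k \<le> 1" by (rule gdist_adj[of ?E i k, OF k(1)])
        have "\<not> is_leaf ?E k"
        proof
          assume "is_leaf ?E k"
          then have "2 \<le> gdist ?E i k" using leaf by blast
          then have "(2::enat) \<le> 1" using \<open>gdist ?E i k \<le> 1\<close> by (rule order.trans)
          then show False by simp
        qed
        then obtain m where m: "?E k m" "m \<noteq> i" using nonleaf_other[of ?E k i, OF sym[OF k(1)]] by blast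
        have mM: "m \<in> M" unfolding M_def using k(1) kj m by blast
        have km: "k \<noteq> m" using m irr by blast
        show ?thesis
        proof (rule key[OF k(2)])
          show "cg k m \<in> min_gens I" using cg[OF m(1)] by simp
          show "mdvd (cg k m) (Poly_Mapping.single k (Poly_Mapping.lookup (cg k m) k) + F)"
            unfolding mdvd_def
          proof
            fix v
            show "Poly_Mapping.lookup (cg k m) v \<le> Poly_Mapping.lookup (Poly_Mapping.single k (Poly_Mapping.lookup (cg k m) k) + F) v"
            proof (cases "v = k \<or> v = m")
              case True
              then show ?thesis using E0[of k m] mM Mi[OF mM] Mj[OF mM] km
                by (auto simp: lookup_add lookup_single when_def lF)
            next
              case False
              then have "Poly_Mapping.lookup (cg k m) v = 0"
                using lookup_out[of "cg k m" k m v] cg[OF m(1)] by simp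
              then show ?thesis by simp
            qed
          qed
        qed
      qed
    qed
  qed
  have "f \<in> symb_power1 I" unfolding symb_power1_def by (rule INT_I) (rule inloc)
  with notin show ?thesis by blast
qed

theorem proposition3p3:
  fixes I :: "('v::finite, 'k::field) mpoly set"
    and xi xj :: 'v
  assumes "support2 I"
    and "girth_ge (gadj I) 6"
    and "gadj I xi xj"
    and "alpha I xi xj \<ge> 2"
    and "(\<forall>l. is_leaf (gadj I) l \<longrightarrow> gdist (gadj I) xi l \<ge> 2) \<or>
         (\<forall>l. is_leaf (gadj I) l \<longrightarrow> gdist (gadj I) xj l \<ge> 2)"
  shows "symb_power1 I \<noteq> I"
proof -
  have a2: "alpha I xj xi \<ge> 2" using assms(4) unfolding alpha_def by (simp add: insert_commute)
  show ?thesis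
    using assms(5)
  proof
    assume "\<forall>l. is_leaf (gadj I) l \<longrightarrow> gdist (gadj I) xi l \<ge> 2"
    then show ?thesis by (rule main_one_side[OF assms(1,2,3,4)])
  next
    assume "\<forall>l. is_leaf (gadj I) l \<longrightarrow> gdist (gadj I) xj l \<ge> 2"
    then show ?thesis by (rule main_one_side[OF assms(1,2) gadj_sym[OF assms(3)] a2])
  qed
qed

end
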